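(* Let $(P,\epsilon)$ be a labeled poset. Then $\Phi_\epsilon:\mathcal{A}(\epsilon)\to\mathcal{A}(-\epsilon)$, $\Phi_\epsilon\sigma=\sigma+\delta_\epsilon$, is a bijection if and only if $P$ is dual $\epsilon$-consistent.
   Context: $P$ is a finite poset with $p$ elements, $\omega:P\to\{1,\dots,p\}$ a bijection; write $x\prec y$ if $y$ covers $x$, $E(P)$ the covering pairs, and $\epsilon(x,y)=1$ if $\omega(x)<\omega(y)$, $-1$ otherwise. $-\epsilon$ is defined by $(-\epsilon)(x,y)=-\epsilon(x,y)$ (it is induced by the labeling $p+1-\omega$). For a labeling $\epsilon$, a $(P,\epsilon)$-partition is an order-reversing map $\sigma:P\to\{1,2,\dots\}$ ($x\le y\Rightarrow\sigma(x)\ge\sigma(y)$) with $\sigma(x)>\sigma(y)$ whenever $x\prec y$ and $\epsilon(x,y)=-1$; $\mathcal{A}(\epsilon)$ is the set of $(P,\epsilon)$-partitions. Define $\delta_\epsilon(x)=\max\sum_{i=1}^{\ell}\epsilon(x_{i-1},x_i)$ over all saturated chains $x=x_0\prec x_1\prec\cdots\prec x_\ell$ with $x_\ell$ maximal in $P$. The map $\Phi_\epsilon$ sends $\mathcal{A}(\epsilon)$ injectively into $\mathcal{A}(-\epsilon)$. The dual $(P^*,\epsilon^* )$ has $x<_{P^*}y$ iff $y<_P x$ and $\epsilon^*(y,x)=-\epsilon(x,y)$. A poset $Q$ with labeling $\nu$ is $\nu$-consistent if for each $z$, the sum $\sum\nu(x_{i-1},x_i)$ is the same over all maximal chains $x_0\prec\cdots\prec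 x_n$ of $\{w\le_Q z\}$. $P$ is dual $\epsilon$-consistent if $P^*$ is $\epsilon^*$-consistent. *)

theory Defs
  imports Main
begin

definition poset_on :: "'a set \<Rightarrow> ('a \<Rightarrow> 'a \<Rightarrow> bool) \<Rightarrow> bool" where
  "poset_on P le \<longleftrightarrow>
     (\<forall>x\<in>P. le x x) \<and>
     (\<forall>x\<in>P. \<forall>y\<in>P. le x y \<and> le y x \<longrightarrow> x = y) \<and>
     (\<forall>x\<in>P. \<forall>y\<in>P. \<forall>z\<in>P. le x y \<and> le y z \<longrightarrow> le x z)"

definition covers :: "'a set \<Rightarrow> ('a \<Rightarrow> 'a \<Rightarrow> bool) \<Rightarrow> 'a \<Rightarrow> 'a \<Rightarrow> bool" where
  "covers P le x y \<longleftrightarrow> x \<in> P \<and> y \<in> P \<and> le x y \<and> x \<noteq> y \<and>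
     \<not> (\<exists>z\<in>P. le x z \<and> le z y \<and> z \<noteq> x \<and> z \<noteq> y)"

definition maximal_in :: "'a set \<Rightarrow> ('a \<Rightarrow> 'a \<Rightarrow> bool) \<Rightarrow> 'a \<Rightarrow> bool" where
  "maximal_in P le x \<longleftrightarrow> x \<in> P \<and> \<not> (\<exists>y\<in>P. le x y \<and> y \<noteq> x)"

definition eps_of :: "('a \<Rightarrow> nat) \<Rightarrow> 'a \<Rightarrow> 'a \<Rightarrow> int" where
  "eps_of \<omega> x y = (if \<omega> x < \<omega> y then 1 else -1)"

definition neg_lab :: "('a \<Rightarrow> 'a \<Rightarrow> int) \<Rightarrow> 'a \<Rightarrow> 'a \<Rightarrow> int" where
  "neg_lab \<epsilon> x y = - \<epsilon> x y"

definition chain_sum :: "('a \<Rightarrow> 'a \<Rightarrow> int) \<Rightarrow> 'a list \<Rightarrow> int" where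
  "chain_sum \<nu> xs = (\<Sum>i<length xs - 1. \<nu> (xs ! i) (xs ! Suc i))"

definition sat_chain_to_max :: "'a set \<Rightarrow> ('a \<Rightarrow> 'a \<Rightarrow> bool) \<Rightarrow> 'a \<Rightarrow> 'a list \<Rightarrow> bool" where
  "sat_chain_to_max P le x xs \<longleftrightarrow> xs \<noteq> [] \<and> hd xs = x \<and> set xs \<subseteq> P \<and>
     (\<forall>i. Suc i < length xs \<longrightarrow> covers P le (xs ! i) (xs ! Suc i)) \<and>
     maximal_in P le (last xs)"

definition delta :: "'a set \<Rightarrow> ('a \<Rightarrow> 'a \<Rightarrow> bool) \<Rightarrow> ('a \<Rightarrow> 'a \<Rightarrow> int) \<Rightarrow> 'a \<Rightarrow> int" where
  "delta P le \<epsilon> x = Max {chain_sum \<epsilon> xs | xs. sat_chain_to_max P le x xs}"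

text \<open>(P,epsilon)-partitions: maps P \<rightarrow> {1,2,...} (represented as int-valued functions,
  equal to 0 outside P so that they are determined by their values on P).\<close>
definition partitions :: "'a set \<Rightarrow> ('a \<Rightarrow> 'a \<Rightarrow> bool) \<Rightarrow> ('a \<Rightarrow> 'a \<Rightarrow> int) \<Rightarrow> ('a \<Rightarrow> int) set" where
  "partitions P le \<epsilon> = {\<sigma>. (\<forall>x\<in>P. \<sigma> x \<ge> 1) \<and> (\<forall>x. x \<notin> P \<longrightarrow> \<sigma> x = 0) \<and>
      (\<forall>x\<in>P. \<forall>y\<in>P. le x y \<longrightarrow> \<sigma> x \<ge> \<sigma> y) \<and>
      (\<forall>x y. covers P le x y \<and> \<epsilon> x y = -1 \<longrightarrow> \<sigma> x > \<sigma> y)}"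

definition Phi :: "'a set \<Rightarrow> ('a \<Rightarrow> 'a \<Rightarrow> bool) \<Rightarrow> ('a \<Rightarrow> 'a \<Rightarrow> int) \<Rightarrow> ('a \<Rightarrow> int) \<Rightarrow> 'a \<Rightarrow> int" where
  "Phi P le \<epsilon> \<sigma> = (\<lambda>x. if x \<in> P then \<sigma> x + delta P le \<epsilon> x else 0)"

definition is_chain :: "('a \<Rightarrow> 'a \<Rightarrow> bool) \<Rightarrow> 'a set \<Rightarrow> 'a list \<Rightarrow> bool" where
  "is_chain le S xs \<longleftrightarrow> set xs \<subseteq> S \<and> sorted_wrt (\<lambda>a b. le a b \<and> a \<noteq> b) xs"

definition max_chain :: "('a \<Rightarrow> 'a \<Rightarrow> bool) \<Rightarrow> 'a set \<Rightarrow> 'a list \<Rightarrow> bool" where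
  "max_chain le S xs \<longleftrightarrow> is_chain le S xs \<and>
     (\<forall>ys. is_chain le S ys \<and> set xs \<subseteq> set ys \<longrightarrow> set ys = set xs)"

definition consistent :: "'a set \<Rightarrow> ('a \<Rightarrow> 'a \<Rightarrow> bool) \<Rightarrow> ('a \<Rightarrow> 'a \<Rightarrow> int) \<Rightarrow> bool" where
  "consistent Q le \<nu> \<longleftrightarrow> (\<forall>z\<in>Q. \<exists>c. \<forall>xs. max_chain le {w\<in>Q. le w z} xs \<longrightarrow> chain_sum \<nu> xs = c)"

definition dual_le :: "('a \<Rightarrow> 'a \<Rightarrow> bool) \<Rightarrow> 'a \<Rightarrow> 'a \<Rightarrow> bool" where
  "dual_le le x y = le y x"

definition dual_lab :: "('a \<Rightarrow> 'a \<Rightarrow> int) \<Rightarrow> 'a \<Rightarrow> 'a \<Rightarrow> int" where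
  "dual_lab \<epsilon> y x = - \<epsilon> x y"

definition dual_consistent :: "'a set \<Rightarrow> ('a \<Rightarrow> 'a \<Rightarrow> bool) \<Rightarrow> ('a \<Rightarrow> 'a \<Rightarrow> int) \<Rightarrow> bool" where
  "dual_consistent P le \<epsilon> \<longleftrightarrow> consistent P (dual_le le) (dual_lab \<epsilon>)"

end

theory Submission
  imports Defs
begin


locale fp =
  fixes P :: "'a set" and le :: "'a \<Rightarrow> 'a \<Rightarrow> bool" and \<epsilon> :: "'a \<Rightarrow> 'a \<Rightarrow> int"
  assumes fin: "finite P" and po: "poset_on P le"
    and epsv: "\<And>x y. \<epsilon> x y = 1 \<or> \<epsilon> x y = -1"
begin

lemma refl: "x \<in> P \<Longrightarrow> le x x" using po unfolding poset_on_def by blast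
lemma antisym: "x \<in> P \<Longrightarrow> y \<in> P \<Longrightarrow> le x y \<Longrightarrow> le y x \<Longrightarrow> x = y"
  using po unfolding poset_on_def by blast
lemma trans: "x \<in> P \<Longrightarrow> y \<in> P \<Longrightarrow> z \<in> P \<Longrightarrow> le x y \<Longrightarrow> le y z \<Longrightarrow> le x z"
  using po unfolding poset_on_def by blast

definition up :: "'a \<Rightarrow> 'a set" where "up w = {v\<in>P. le w v \<and> v \<noteq> w}"

lemma up_psubset:
  assumes "a \<in> P" "b \<in> P" "le a b" "a \<noteq> b"
  shows "card (up b) < card (up a)"
proof -
  have "up b \<subset> up a"
  proof
    show "up b \<subseteq> up a" using assms unfolding up_def by (auto dest: trans antisym)
    show "up b \<noteq> up a" using assms unfolding up_def by auto
  qed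
  moreover have "finite (up a)" using fin unfolding up_def by auto
  ultimately show ?thesis by (simp add: psubset_card_mono)
qed

lemma up_card_le: "card (up a) \<le> card P"
  using fin unfolding up_def by (intro card_mono) auto

lemma up_induct:
  assumes "x \<in> P"
    and step: "\<And>x. x \<in> P \<Longrightarrow> (\<And>y. y \<in> P \<Longrightarrow> le x y \<Longrightarrow> x \<noteq> y \<Longrightarrow> Q y) \<Longrightarrow> Q x"
  shows "Q x"
proof -
  have "\<forall>x. x \<in> P \<longrightarrow> card (up x) = n \<longrightarrow> Q x" for n
  proof (induction n rule: less_induct)
    case (less n)
    show ?case
    proof (intro allI impI)
      fix x assume x: "x \<in> P" "card (up x) = n"
      show "Q x"
      proof (rule step[OF x(1)])
        fix y assume "y \<in> P" "le x y" "x \<noteq> y"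
        then show "Q y" using less x up_psubset by blast
      qed
    qed
  qed
  then show ?thesis using assms(1) by blast
qed

lemma cover_exists:
  assumes "x \<in> P" "v \<in> P" "le x v" "v \<noteq> x"
  shows "\<exists>y. covers P le x y \<and> le y v"
proof -
  define S where "S = {u\<in>P. le x u \<and> u \<noteq> x \<and> le u v}"
  define m where "m u = card {t\<in>P. le x t \<and> le t u}" for u
  have "v \<in> S" using assms unfolding S_def by (auto intro: refl)
  then obtain u where u: "u \<in> S" and umin: "\<And>u'. u' \<in> S \<Longrightarrow> m u \<le> m u'"
    using ex_has_least_nat[of "\<lambda>u. u \<in> S" v m] by blast
  have "covers P le x u"
    unfolding covers_def
  proof (intro conjI)
    show "x \<in> P" "u \<in> P" "le x u" "x \<noteq> u" using u assms unfolding S_def by auto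
    show "\<not> (\<exists>z\<in>P. le x z \<and> le z u \<and> z \<noteq> x \<and> z \<noteq> u)"
    proof
      assume "\<exists>z\<in>P. le x z \<and> le z u \<and> z \<noteq> x \<and> z \<noteq> u"
      then obtain z where z: "z \<in> P" "le x z" "le z u" "z \<noteq> x" "z \<noteq> u" by blast
      have zS: "z \<in> S" using z u assms unfolding S_def by (auto dest: trans)
      have "{t\<in>P. le x t \<and> le t z} \<subset> {t\<in>P. le x t \<and> le t u}"
      proof
        show "{t\<in>P. le x t \<and> le t z} \<subseteq> {t\<in>P. le x t \<and> le t u}"
          using z u unfolding S_def by (auto dest: trans)
        have "u \<notin> {t\<in>P. le x t \<and> le t z}" using z u unfolding S_def by (auto dest: antisym)
        moreover have "u \<in> {t\<in>P. le x t \<and> le t u}" using u assms unfolding S_def by (auto intro: refl)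
        ultimately show "{t\<in>P. le x t \<and> le t z} \<noteq> {t\<in>P. le x t \<and> le t u}" by blast
      qed
      then have "m z < m u" unfolding m_def using fin by (intro psubset_card_mono) auto
      with umin[OF zS] show False by simp
    qed
  qed
  then show ?thesis using u unfolding S_def by blast
qed

lemma mono_from_covers:
  assumes cov: "\<And>a b. covers P le a b \<Longrightarrow> f b \<le> (f a :: int)"
    and "x \<in> P" "v \<in> P" "le x v"
  shows "f v \<le> f x"
proof -
  have "le x v \<longrightarrow> f v \<le> f x"
  proof (rule up_induct[OF assms(2)])
    fix x assume x: "x \<in> P" and IH: "\<And>y. y \<in> P \<Longrightarrow> le x y \<Longrightarrow> x \<noteq> y \<Longrightarrow> le y v \<longrightarrow> f v \<le> f y"
    show "le x v \<longrightarrow> f v \<le> f x"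
    proof
      assume xv: "le x v"
      show "f v \<le> f x"
      proof (cases "x = v")
        case False
        then obtain y where y: "covers P le x y" "le y v" using cover_exists x xv assms(3) by metis
        then have "y \<in> P" "le x y" "x \<noteq> y" unfolding covers_def by auto
        then have "f v \<le> f y" using IH y by blast
        then show ?thesis using cov[OF y(1)] by simp
      qed simp
    qed
  qed
  then show ?thesis using assms(4) by blast
qed

end


lemma cov2: "(\<forall>i. Suc i < length (a#b#r) \<longrightarrow> C ((a#b#r)!i) ((a#b#r)!Suc i)) \<longleftrightarrow>
   C a b \<and> (\<forall>i. Suc i < length (b#r) \<longrightarrow> C ((b#r)!i) ((b#r)!Suc i))"
proof (intro iffI conjI allI impI)
  assume H: "\<forall>i. Suc i < length (a#b#r) \<longrightarrow> C ((a#b#r)!i) ((a#b#r)!Suc i)"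
  show "C a b" using H[rule_format, of 0] by simp
  fix i assume "Suc i < length (b#r)"
  then show "C ((b#r)!i) ((b#r)!Suc i)" using H[rule_format, of "Suc i"] by simp
next
  fix i assume H: "C a b \<and> (\<forall>i. Suc i < length (b#r) \<longrightarrow> C ((b#r)!i) ((b#r)!Suc i))"
    and i: "Suc i < length (a#b#r)"
  show "C ((a#b#r)!i) ((a#b#r)!Suc i)"
  proof (cases i)
    case 0 then show ?thesis using H by simp
  next
    case (Suc j) then show ?thesis using H i by auto
  qed
qed

lemma cs_Nil[simp]: "chain_sum \<nu> [] = 0" by (simp add: chain_sum_def)
lemma cs_single[simp]: "chain_sum \<nu> [a] = 0" by (simp add: chain_sum_def)
lemma cs_Cons2[simp]: "chain_sum \<nu> (a#b#r) = \<nu> a b + chain_sum \<nu> (b#r)"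
  unfolding chain_sum_def by (simp add: sum.lessThan_Suc_shift del: sum.lessThan_Suc)

lemma cs_snoc: "xs \<noteq> [] \<Longrightarrow> chain_sum \<nu> (xs @ [b]) = chain_sum \<nu> xs + \<nu> (last xs) b"
proof (induction xs)
  case (Cons a r)
  then show ?case by (cases r) auto
qed simp

lemma cs_rev: "chain_sum (dual_lab \<epsilon>) (rev xs) = - chain_sum \<epsilon> xs"
proof (induction xs)
  case (Cons a r)
  show ?case
  proof (cases r)
    case (Cons b r')
    have "chain_sum (dual_lab \<epsilon>) (rev r @ [a]) = chain_sum (dual_lab \<epsilon>) (rev r) + dual_lab \<epsilon> (last (rev r)) a"
      by (rule cs_snoc) (simp add: Cons)
    then have "chain_sum (dual_lab \<epsilon>) (rev (a#r)) = chain_sum (dual_lab \<epsilon>) (rev r) + dual_lab \<epsilon> b a"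
      using Cons by simp
    moreover have "dual_lab \<epsilon> b a = - \<epsilon> a b" by (simp add: dual_lab_def)
    ultimately show ?thesis using Cons.IH Cons by simp
  qed simp
qed simp

context fp begin

abbreviation "sat \<equiv> sat_chain_to_max P le"
abbreviation "\<delta> \<equiv> delta P le \<epsilon>"

lemma covers_P: "covers P le a b \<Longrightarrow> a \<in> P \<and> b \<in> P"
  unfolding covers_def by auto

lemma sat_cases: "sat x xs \<longleftrightarrow> (xs = [x] \<and> maximal_in P le x) \<or>
   (\<exists>y ys. xs = x # ys \<and> covers P le x y \<and> sat y ys \<and> hd ys = y)"
proof (cases xs)
  case Nil then show ?thesis by (simp add: sat_chain_to_max_def)
next
  case (Cons a r)
  show ?thesis
  proof (cases r)
    case Nil then show ?thesis using Cons by (auto simp: sat_chain_to_max_def maximal_in_def)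
  next
    case (Cons b r')
    have "sat x (a#b#r') \<longleftrightarrow> a = x \<and> covers P le a b \<and> sat b (b#r')"
      unfolding sat_chain_to_max_def cov2[where C="covers P le"] using covers_P by auto
    then show ?thesis using Cons \<open>xs = a#r\<close> by auto
  qed
qed

lemma sat_P: "sat x xs \<Longrightarrow> x \<in> P"
  unfolding sat_chain_to_max_def by (cases xs) auto

lemma sat_hd0: "sat z xs \<Longrightarrow> \<exists>r. xs = z # r"
  unfolding sat_chain_to_max_def by (cases xs) auto

lemma sat_consI: assumes c: "covers P le x y" and s: "sat y ys" shows "sat x (x # ys)"
proof -
  have "hd ys = y" using sat_hd0[OF s] by auto
  then show ?thesis using sat_cases[of x "x#ys"] c s by blast
qed

lemma sat_exists: assumes "x \<in> P" shows "\<exists>xs. sat x xs"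
proof (rule up_induct[OF assms])
  fix x assume x: "x \<in> P" and IH: "\<And>y. y \<in> P \<Longrightarrow> le x y \<Longrightarrow> x \<noteq> y \<Longrightarrow> \<exists>xs. sat y xs"
  show "\<exists>xs. sat x xs"
  proof (cases "maximal_in P le x")
    case True then show ?thesis using sat_cases[of x "[x]"] by blast
  next
    case False
    then obtain v where "v \<in> P" "le x v" "v \<noteq> x" using x unfolding maximal_in_def by blast
    then obtain y where y: "covers P le x y" using cover_exists x by blast
    then have "y \<in> P" "le x y" "x \<noteq> y" unfolding covers_def by auto
    then obtain ys where "sat y ys" using IH by blast
    moreover then have "hd ys = y" unfolding sat_chain_to_max_def by auto
    ultimately show ?thesis using y sat_cases[of x "x#ys"] by blast
  qed
qed

lemma sat_bound: assumes "x \<in> P" shows "\<forall>xs. sat x xs \<longrightarrow> \<bar>chain_sum \<epsilon> xs\<bar> \<le> int (card (up x))"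
proof (rule up_induct[OF assms])
  fix x assume x: "x \<in> P" and IH: "\<And>y. y \<in> P \<Longrightarrow> le x y \<Longrightarrow> x \<noteq> y \<Longrightarrow> \<forall>xs. sat y xs \<longrightarrow> \<bar>chain_sum \<epsilon> xs\<bar> \<le> int (card (up y))"
  show "\<forall>xs. sat x xs \<longrightarrow> \<bar>chain_sum \<epsilon> xs\<bar> \<le> int (card (up x))"
  proof (intro allI impI)
    fix xs assume s: "sat x xs"
    show "\<bar>chain_sum \<epsilon> xs\<bar> \<le> int (card (up x))"
    proof (cases "xs = [x]")
      case False
      then obtain y ys where yy: "xs = x # ys" "covers P le x y" "sat y ys" "hd ys = y"
        using s sat_cases[of x xs] by blast
      then obtain r where ys: "ys = y # r" using sat_hd0[OF yy(3)] by blast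
      have y: "y \<in> P" "le x y" "x \<noteq> y" using yy unfolding covers_def by auto
      have "\<bar>chain_sum \<epsilon> ys\<bar> \<le> int (card (up y))" using IH y yy by blast
      moreover have "card (up y) < card (up x)" using up_psubset y x by blast
      moreover have "\<bar>\<epsilon> x y\<bar> \<le> 1" using epsv[of x y] by auto
      ultimately show ?thesis using yy ys by simp
    qed simp
  qed
qed

definition CS where "CS x = {chain_sum \<epsilon> xs | xs. sat x xs}"

lemma CS_fin: "x \<in> P \<Longrightarrow> finite (CS x)"
proof -
  assume x: "x \<in> P"
  have "CS x \<subseteq> {- int (card P) .. int (card P)}"
  proof
    fix c assume "c \<in> CS x"
    then obtain xs where "sat x xs" "c = chain_sum \<epsilon> xs" unfolding CS_def by blast
    then have "\<bar>c\<bar> \<le> int (card (up x))" using sat_bound x by blast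
    then show "c \<in> {- int (card P) .. int (card P)}" using up_card_le[of x] by auto
  qed
  then show ?thesis using finite_subset by blast
qed

lemma CS_ne: "x \<in> P \<Longrightarrow> CS x \<noteq> {}"
  using sat_exists unfolding CS_def by blast

lemma delta_ge: "sat x xs \<Longrightarrow> chain_sum \<epsilon> xs \<le> \<delta> x"
proof -
  assume s: "sat x xs"
  then have "x \<in> P" by (rule sat_P)
  then show ?thesis using CS_fin s unfolding delta_def CS_def by (intro Max_ge) auto
qed

lemma delta_att: "x \<in> P \<Longrightarrow> \<exists>xs. sat x xs \<and> chain_sum \<epsilon> xs = \<delta> x"
proof -
  assume x: "x \<in> P"
  have "\<delta> x \<in> CS x" unfolding delta_def using CS_fin[OF x] CS_ne[OF x]
    unfolding CS_def by (intro Max_in) auto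
  then show ?thesis unfolding CS_def mem_Collect_eq by metis
qed

lemma delta_cover: "covers P le x y \<Longrightarrow> \<epsilon> x y + \<delta> y \<le> \<delta> x"
proof -
  assume c: "covers P le x y"
  then have "y \<in> P" unfolding covers_def by auto
  then obtain ys where ys: "sat y ys" "chain_sum \<epsilon> ys = \<delta> y" using delta_att by blast
  then obtain r where r: "ys = y # r" using sat_hd0[OF ys(1)] by blast
  have "sat x (x # ys)" using sat_consI c ys(1) by blast
  then have "chain_sum \<epsilon> (x # ys) \<le> \<delta> x" by (rule delta_ge)
  then show ?thesis using ys r by simp
qed

lemma delta_max: "maximal_in P le x \<Longrightarrow> \<delta> x = 0"
proof -
  assume m: "maximal_in P le x"
  then have x: "x \<in> P" unfolding maximal_in_def by auto
  obtain xs where xs: "sat x xs" "chain_sum \<epsilon> xs = \<delta> x" using delta_att x by blast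
  have "xs = [x]"
  proof (rule ccontr)
    assume "xs \<noteq> [x]"
    then obtain y where "covers P le x y" using xs sat_cases[of x xs] by blast
    then show False using m unfolding covers_def maximal_in_def by auto
  qed
  then show ?thesis using xs by simp
qed

lemma delta_nonmax: "x \<in> P \<Longrightarrow> \<not> maximal_in P le x \<Longrightarrow> \<exists>y. covers P le x y \<and> \<delta> x = \<epsilon> x y + \<delta> y"
proof -
  assume x: "x \<in> P" and m: "\<not> maximal_in P le x"
  obtain xs where xs: "sat x xs" "chain_sum \<epsilon> xs = \<delta> x" using delta_att x by blast
  then obtain y ys where yy: "xs = x # ys" "covers P le x y" "sat y ys" "hd ys = y"
    using sat_cases[of x xs] m by blast
  then obtain r where r: "ys = y # r" using sat_hd0[OF yy(3)] by blast
  have "chain_sum \<epsilon> ys \<le> \<delta> y" using yy delta_ge by blast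
  then have "\<delta> x \<le> \<epsilon> x y + \<delta> y" using xs yy r by simp
  then have "\<delta> x = \<epsilon> x y + \<delta> y" using delta_cover[OF yy(2)] by linarith
  then show ?thesis using yy(2) by blast
qed

end


lemma sorted_comparable: "sorted_wrt R ys \<Longrightarrow> a \<in> set ys \<Longrightarrow> b \<in> set ys \<Longrightarrow> a \<noteq> b \<Longrightarrow> R a b \<or> R b a"
  by (induction ys) auto

context fp begin

definition lt where "lt a b \<longleftrightarrow> a \<in> P \<and> b \<in> P \<and> le a b \<and> a \<noteq> b"

lemma lt_trans: "lt a b \<Longrightarrow> lt b c \<Longrightarrow> lt a c"
  unfolding lt_def by (metis trans antisym)

lemma transp_lt: "transp lt"
  by (meson lt_trans transpI)

definition U where "U z = {w\<in>P. dual_le le w z}"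

lemma U_iff: "w \<in> U z \<longleftrightarrow> w \<in> P \<and> le z w"
  unfolding U_def dual_le_def by auto

lemma covers_lt: "covers P le a b \<Longrightarrow> lt a b"
  unfolding covers_def lt_def by auto

lemma sat_sorted: "sat z xs \<Longrightarrow> sorted_wrt lt xs"
  unfolding sorted_wrt_iff_nth_Suc_transp[OF transp_lt] sat_chain_to_max_def
  using covers_lt by blast

lemma sat_hd: "sat z xs \<Longrightarrow> xs = z # tl xs"
  unfolding sat_chain_to_max_def by (cases xs) auto

lemma sat_between: "sat x xs \<Longrightarrow> w \<in> P \<Longrightarrow> (\<forall>a\<in>set xs. le a w \<or> le w a) \<Longrightarrow> le x w \<Longrightarrow> w \<in> set xs"
proof (induction xs arbitrary: x)
  case Nil then show ?case by (simp add: sat_chain_to_max_def)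
next
  case (Cons a r)
  show ?case
  proof (cases "a # r = [x] \<and> maximal_in P le x")
    case True
    then show ?thesis using Cons.prems unfolding maximal_in_def by auto
  next
    case False
    then obtain y where yy: "a # r = x # r" "covers P le x y" "sat y r" "hd r = y"
      using Cons.prems(1) sat_cases[of x "a#r"] by auto
    have yr: "y \<in> set r" using yy sat_hd by (metis list.set_intros(1))
    have x: "x \<in> P" "y \<in> P" using yy covers_P by auto
    show ?thesis
    proof (cases "le y w")
      case True
      then have "w \<in> set r" using Cons.IH[OF yy(3) Cons.prems(2)] Cons.prems(3) by auto
      then show ?thesis by simp
    next
      case False
      then have "le w y" using Cons.prems(3) yr by auto
      then have "w = x \<or> w = y" using yy(2) Cons.prems unfolding covers_def by auto
      then show ?thesis using yr yy by auto
    qed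
  qed
qed

lemma L1: assumes s: "sat z xs" shows "max_chain (dual_le le) (U z) (rev xs)"
proof -
  have so: "sorted_wrt lt xs" using sat_sorted s by blast
  have z: "z \<in> P" using sat_P s by blast
  have setU: "set xs \<subseteq> U z"
  proof
    fix w assume w: "w \<in> set xs"
    have "xs = z # tl xs" using sat_hd s by blast
    then have "w = z \<or> lt z w" using so w by (metis set_ConsD sorted_wrt.simps(2))
    then show "w \<in> U z" using z refl unfolding U_iff lt_def by auto
  qed
  have ch: "is_chain (dual_le le) (U z) (rev xs)"
    unfolding is_chain_def sorted_wrt_rev using setU
    by (auto intro: sorted_wrt_mono_rel[OF _ so] simp: lt_def dual_le_def)
  show ?thesis unfolding max_chain_def
  proof (intro conjI allI impI ch)
    fix ys assume ys: "is_chain (dual_le le) (U z) ys \<and> set (rev xs) \<subseteq> set ys"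
    show "set ys = set (rev xs)"
    proof
      show "set ys \<subseteq> set (rev xs)"
      proof
        fix w assume w: "w \<in> set ys"
        then have wU: "w \<in> P" "le z w" using ys U_iff unfolding is_chain_def by blast+
        have "\<forall>a\<in>set xs. le a w \<or> le w a"
        proof
          fix a assume "a \<in> set xs"
          then have "a \<in> set ys" using ys by auto
          then show "le a w \<or> le w a"
            using sorted_comparable[of _ ys a w] ys w refl wU unfolding is_chain_def dual_le_def
            by (cases "a = w") auto
        qed
        then show "w \<in> set (rev xs)" using sat_between[OF s wU(1)] wU by auto
      qed
    qed (use ys in auto)
  qed
qed

fun ins where
  "ins w [] = [w]"
| "ins w (a # r) = (if le w a then w # a # r else a # ins w r)"

lemma ins_props: "sorted_wrt lt xs \<Longrightarrow> w \<in> P \<Longrightarrow> w \<notin> set xs \<Longrightarrow> set xs \<subseteq> P \<Longrightarrow>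
   (\<forall>a\<in>set xs. le a w \<or> le w a) \<Longrightarrow> sorted_wrt lt (ins w xs) \<and> set (ins w xs) = insert w (set xs)"
proof (induction xs)
  case (Cons a r)
  show ?case
  proof (cases "le w a")
    case True
    then have "lt w a" using Cons.prems unfolding lt_def by auto
    then have "\<forall>b\<in>set r. lt w b" using Cons.prems(1) lt_trans by auto
    then show ?thesis using True Cons.prems \<open>lt w a\<close> by auto
  next
    case False
    then have "lt a w" using Cons.prems unfolding lt_def by auto
    moreover have "sorted_wrt lt (ins w r) \<and> set (ins w r) = insert w (set r)"
      using Cons by auto
    ultimately show ?thesis using False Cons.prems by auto
  qed
qed simp

lemma chain_sorted: assumes "set xs \<subseteq> U z" "sorted_wrt (\<lambda>a b. le b a \<and> a \<noteq> b) (rev xs)"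
  shows "sorted_wrt lt xs"
proof (rule sorted_wrt_mono_rel[OF _ assms(2)[unfolded sorted_wrt_rev]])
  fix a b assume "a \<in> set xs" "b \<in> set xs" "le a b \<and> b \<noteq> a"
  then show "lt a b" using assms(1) U_iff unfolding lt_def by blast
qed

lemma ext_in: assumes m: "max_chain (dual_le le) (U z) (rev xs)" and w: "w \<in> U z"
  and comp: "\<forall>a\<in>set xs. le a w \<or> le w a"
  shows "w \<in> set xs"
proof (rule ccontr)
  assume nw: "w \<notin> set xs"
  have ch: "set xs \<subseteq> U z" "sorted_wrt (\<lambda>a b. le b a \<and> a \<noteq> b) (rev xs)"
    using m unfolding max_chain_def is_chain_def dual_le_def by auto
  have so: "sorted_wrt lt xs" using chain_sorted ch by blast
  have wP: "w \<in> P" using w U_iff by auto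
  have sP: "set xs \<subseteq> P" using ch U_iff by auto
  from ins_props[OF so wP nw sP comp]
  have i: "sorted_wrt lt (ins w xs)" "set (ins w xs) = insert w (set xs)" by auto
  have "is_chain (dual_le le) (U z) (rev (ins w xs))"
    unfolding is_chain_def sorted_wrt_rev using i ch w
    by (auto intro: sorted_wrt_mono_rel[OF _ i(1)] simp: lt_def dual_le_def)
  moreover have "set (rev xs) \<subseteq> set (rev (ins w xs))" using i by auto
  ultimately have "set (rev (ins w xs)) = set (rev xs)" using m unfolding max_chain_def by blast
  then show False using i nw by auto
qed

lemma L2: assumes m: "max_chain (dual_le le) (U z) ys" and z: "z \<in> P"
  shows "sat z (rev ys)"
proof -
  define xs where "xs = rev ys"
  have m': "max_chain (dual_le le) (U z) (rev xs)" using m xs_def by simp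
  have ch: "set xs \<subseteq> U z" "sorted_wrt (\<lambda>a b. le b a \<and> a \<noteq> b) (rev xs)"
    using m' unfolding max_chain_def is_chain_def dual_le_def by auto
  have so: "sorted_wrt lt xs" using chain_sorted ch by blast
  have sP: "set xs \<subseteq> P" using ch U_iff by auto
  have zU: "z \<in> U z" using z refl U_iff by auto
  have "z \<in> set xs" using ext_in[OF m' zU] ch U_iff by auto
  then obtain a r where ar: "xs = a # r" by (cases xs) auto
  have hd: "a = z"
  proof (rule ccontr)
    assume "a \<noteq> z"
    then have "lt a z" using so ar \<open>z \<in> set xs\<close> by auto
    moreover have "le z a" using ch ar U_iff by auto
    ultimately show False using antisym unfolding lt_def by auto
  qed
  have nth_lt: "\<And>i j. i < j \<Longrightarrow> j < length xs \<Longrightarrow> lt (xs!i) (xs!j)"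
    using so sorted_wrt_iff_nth_less by blast
  have cov: "covers P le (xs!i) (xs!Suc i)" if i: "Suc i < length xs" for i
  proof -
    have l: "lt (xs!i) (xs!Suc i)" using nth_lt i by auto
    show ?thesis unfolding covers_def
    proof (intro conjI)
      show "xs ! i \<in> P" "xs ! Suc i \<in> P" "le (xs ! i) (xs ! Suc i)" "xs ! i \<noteq> xs ! Suc i"
        using l unfolding lt_def by auto
      show "\<not> (\<exists>w\<in>P. le (xs ! i) w \<and> le w (xs ! Suc i) \<and> w \<noteq> xs ! i \<and> w \<noteq> xs ! Suc i)"
      proof
        assume "\<exists>w\<in>P. le (xs ! i) w \<and> le w (xs ! Suc i) \<and> w \<noteq> xs ! i \<and> w \<noteq> xs ! Suc i"
        then obtain w where w: "w \<in> P" "le (xs ! i) w" "le w (xs ! Suc i)" "w \<noteq> xs ! i" "w \<noteq> xs ! Suc i"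
          by blast
        have iP: "xs!i \<in> P" "xs ! Suc i \<in> P" using l lt_def by auto
        have "le z (xs!i)" using ch i U_iff by (meson Suc_lessD nth_mem subsetD)
        then have wU: "w \<in> U z" using w z iP U_iff trans by blast
        have le_low: "le (xs!j) (xs!i)" if "j \<le> i" for j
          using nth_lt[of j i] i that refl iP unfolding lt_def by (cases "j = i") auto
        have le_high: "le (xs!Suc i) (xs!j)" if "Suc i \<le> j" "j < length xs" for j
          using nth_lt[of "Suc i" j] that refl iP unfolding lt_def by (cases "j = Suc i") auto
        have "\<forall>c\<in>set xs. le c w \<or> le w c"
        proof
          fix c assume "c \<in> set xs"
          then obtain j where j: "j < length xs" "c = xs!j" by (auto simp: in_set_conv_nth)
          have cP: "c \<in> P" using sP j by auto
          show "le c w \<or> le w c"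
          proof (cases "j \<le> i")
            case True
            then have "le c (xs!i)" using le_low[OF True] j by simp
            then show ?thesis using trans[OF cP iP(1) w(1) _ w(2)] by blast
          next
            case False
            then have "le (xs!Suc i) c" using le_high[of j] j by simp
            then show ?thesis using trans[OF w(1) iP(2) cP w(3)] by blast
          qed
        qed
        then have "w \<in> set xs" using ext_in[OF m' wU] by blast
        then obtain j where j: "j < length xs" "w = xs!j" by (auto simp: in_set_conv_nth)
        show False
        proof (cases "j \<le> i")
          case True then show ?thesis using le_low[OF True] j w iP antisym by metis
        next
          case False then show ?thesis using le_high[of j] j w iP antisym by auto
        qed
      qed
    qed
  qed
  have mx: "maximal_in P le (last xs)"
    unfolding maximal_in_def
  proof (intro conjI)
    show lP: "last xs \<in> P" using sP ar by auto
    show "\<not> (\<exists>v\<in>P. le (last xs) v \<and> v \<noteq> last xs)"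
    proof
      assume "\<exists>v\<in>P. le (last xs) v \<and> v \<noteq> last xs"
      then obtain v where v: "v \<in> P" "le (last xs) v" "v \<noteq> last xs" by blast
      have below: "le c (last xs)" if cin: "c \<in> set xs" for c
      proof -
        obtain j where j: "j < length xs" "c = xs!j" using cin by (auto simp: in_set_conv_nth)
        have lst: "last xs = xs ! (length xs - 1)" using ar by (simp add: last_conv_nth)
        show ?thesis
        proof (cases "j = length xs - 1")
          case True then show ?thesis using j lst refl lP by simp
        next
          case False then show ?thesis using nth_lt[of j "length xs - 1"] j lst ar unfolding lt_def by auto
        qed
      qed
      have "le z (last xs)" using ch(1) ar U_iff last_in_set[of xs] by blast
      then have vU: "v \<in> U z" using v z lP trans U_iff by blast
      have "\<forall>c\<in>set xs. le c v \<or> le v c" using below v lP sP trans by blast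
      then have "v \<in> set xs" using ext_in[OF m' vU] by blast
      then show False using below v lP antisym by blast
    qed
  qed
  show ?thesis
    unfolding xs_def[symmetric] sat_chain_to_max_def using ar hd sP cov mx by auto
qed

end


context fp begin

definition K where "K \<longleftrightarrow> (\<forall>x y. covers P le x y \<longrightarrow> \<delta> x = \<epsilon> x y + \<delta> y)"

lemma K_sum: "K \<Longrightarrow> sat x xs \<Longrightarrow> chain_sum \<epsilon> xs = \<delta> x"
proof (induction xs arbitrary: x)
  case Nil then show ?case by (simp add: sat_chain_to_max_def)
next
  case (Cons a r)
  show ?case
  proof (cases "a # r = [x] \<and> maximal_in P le x")
    case True then show ?thesis using delta_max by auto
  next
    case False
    then obtain y where yy: "a # r = x # r" "covers P le x y" "sat y r" "hd r = y"
      using Cons.prems(2) sat_cases[of x "a#r"] by auto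
    obtain r' where r': "r = y # r'" using sat_hd0[OF yy(3)] by blast
    have "chain_sum \<epsilon> r = \<delta> y" using Cons.IH[OF Cons.prems(1) yy(3)] .
    then show ?thesis using yy r' Cons.prems(1) unfolding K_def by auto
  qed
qed

lemma K_cons: "K \<Longrightarrow> dual_consistent P le \<epsilon>"
  unfolding dual_consistent_def consistent_def U_def[symmetric]
proof (intro ballI)
  fix z assume k: K and z: "z \<in> P"
  show "\<exists>c. \<forall>xs. max_chain (dual_le le) (U z) xs \<longrightarrow> chain_sum (dual_lab \<epsilon>) xs = c"
  proof (intro exI allI impI)
    fix ys assume "max_chain (dual_le le) (U z) ys"
    then have "sat z (rev ys)" using L2 z by blast
    then have "chain_sum \<epsilon> (rev ys) = \<delta> z" using K_sum k by blast
    moreover have "chain_sum (dual_lab \<epsilon>) (rev (rev ys)) = - chain_sum \<epsilon> (rev ys)" by (rule cs_rev)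
    ultimately show "chain_sum (dual_lab \<epsilon>) ys = - \<delta> z" by simp
  qed
qed

lemma cons_K: "dual_consistent P le \<epsilon> \<Longrightarrow> K"
  unfolding K_def
proof (intro allI impI)
  fix x y assume dc: "dual_consistent P le \<epsilon>" and c: "covers P le x y"
  have x: "x \<in> P" "y \<in> P" using c covers_P by auto
  obtain xs where xs: "sat x xs" "chain_sum \<epsilon> xs = \<delta> x" using delta_att x by blast
  obtain ys where ys: "sat y ys" "chain_sum \<epsilon> ys = \<delta> y" using delta_att x by blast
  obtain r where r: "ys = y # r" using sat_hd0[OF ys(1)] by blast
  have s2: "sat x (x # ys)" using sat_consI c ys(1) by blast
  obtain cc where cc: "\<forall>zs. max_chain (dual_le le) (U x) zs \<longrightarrow> chain_sum (dual_lab \<epsilon>) zs = cc"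
    using dc x unfolding dual_consistent_def consistent_def U_def[symmetric] by blast
  have "chain_sum (dual_lab \<epsilon>) (rev xs) = cc" using cc L1[OF xs(1)] by blast
  moreover have "chain_sum (dual_lab \<epsilon>) (rev (x # ys)) = cc" using cc L1[OF s2] by blast
  ultimately have "chain_sum \<epsilon> xs = chain_sum \<epsilon> (x # ys)" using cs_rev by (metis neg_equal_iff_equal)
  then show "\<delta> x = \<epsilon> x y + \<delta> y" using xs ys r by simp
qed

abbreviation "Ph \<equiv> Phi P le \<epsilon>"

lemma part_mem: "\<sigma> \<in> partitions P le e \<longleftrightarrow> (\<forall>x\<in>P. \<sigma> x \<ge> 1) \<and> (\<forall>x. x \<notin> P \<longrightarrow> \<sigma> x = 0) \<and>
      (\<forall>x\<in>P. \<forall>y\<in>P. le x y \<longrightarrow> \<sigma> x \<ge> \<sigma> y) \<and>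
      (\<forall>x y. covers P le x y \<and> e x y = -1 \<longrightarrow> \<sigma> x > \<sigma> y)"
  unfolding partitions_def by simp

lemma neg_iff: "neg_lab \<epsilon> a b = -1 \<longleftrightarrow> \<epsilon> a b = 1"
  unfolding neg_lab_def by auto

lemma Phi_in: assumes s: "\<sigma> \<in> partitions P le \<epsilon>" shows "Ph \<sigma> \<in> partitions P le (neg_lab \<epsilon>)"
proof -
  define f where "f = Ph \<sigma>"
  have fP: "x \<in> P \<Longrightarrow> f x = \<sigma> x + \<delta> x" for x unfolding f_def Phi_def by simp
  have s': "\<forall>x\<in>P. \<sigma> x \<ge> 1" "\<forall>x\<in>P. \<forall>y\<in>P. le x y \<longrightarrow> \<sigma> x \<ge> \<sigma> y"
     "\<forall>x y. covers P le x y \<and> \<epsilon> x y = -1 \<longrightarrow> \<sigma> x > \<sigma> y" using s part_mem by auto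
  have cov: "f b \<le> f a \<and> (\<epsilon> a b = 1 \<longrightarrow> f b < f a)" if c: "covers P le a b" for a b
  proof -
    have ab: "a \<in> P" "b \<in> P" "le a b" using c unfolding covers_def by auto
    have "\<epsilon> a b + \<delta> b \<le> \<delta> a" using delta_cover[OF c] .
    moreover have "\<sigma> b \<le> \<sigma> a" using s' ab by blast
    moreover have "\<epsilon> a b = -1 \<longrightarrow> \<sigma> b < \<sigma> a" using s' c by blast
    ultimately show ?thesis using fP ab epsv[of a b] by auto
  qed
  have ge1: "f x \<ge> 1" if x: "x \<in> P" for x
  proof (rule up_induct[OF x])
    fix x assume x: "x \<in> P" and IH: "\<And>y. y \<in> P \<Longrightarrow> le x y \<Longrightarrow> x \<noteq> y \<Longrightarrow> 1 \<le> f y"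
    show "1 \<le> f x"
    proof (cases "maximal_in P le x")
      case True then show ?thesis using delta_max fP x s' by auto
    next
      case False
      then obtain y where y: "covers P le x y" using delta_nonmax x by blast
      then have "y \<in> P" "le x y" "x \<noteq> y" unfolding covers_def by auto
      then have "1 \<le> f y" using IH by blast
      then show ?thesis using cov[OF y] by auto
    qed
  qed
  have mono: "f b \<le> f a" if "a \<in> P" "b \<in> P" "le a b" for a b
    using mono_from_covers[of f a b] cov that by blast
  have out: "f x = 0" if "x \<notin> P" for x using that unfolding f_def Phi_def by simp
  show ?thesis unfolding f_def[symmetric] part_mem
    using ge1 mono out cov neg_iff by blast
qed

lemma Phi_inj: "inj_on Ph (partitions P le \<epsilon>)"
proof (rule inj_onI)
  fix s t assume s: "s \<in> partitions P le \<epsilon>" and t: "t \<in> partitions P le \<epsilon>" and e: "Ph s = Ph t"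
  show "s = t"
  proof
    fix x show "s x = t x"
    proof (cases "x \<in> P")
      case True
      then have "Ph s x = Ph t x" using e by simp
      then show ?thesis using True unfolding Phi_def by simp
    next
      case False then show ?thesis using s t part_mem by auto
    qed
  qed
qed

lemma Phi_surj: assumes k: K and t: "\<tau> \<in> partitions P le (neg_lab \<epsilon>)"
  shows "\<tau> \<in> Ph ` partitions P le \<epsilon>"
proof -
  define \<sigma> where "\<sigma> x = (if x \<in> P then \<tau> x - \<delta> x else 0)" for x
  have t': "\<forall>x\<in>P. \<tau> x \<ge> 1" "\<forall>x\<in>P. \<forall>y\<in>P. le x y \<longrightarrow> \<tau> x \<ge> \<tau> y"
     "\<forall>x y. covers P le x y \<and> \<epsilon> x y = 1 \<longrightarrow> \<tau> x > \<tau> y" "\<forall>x. x \<notin> P \<longrightarrow> \<tau> x = 0"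
    using t part_mem neg_iff by auto
  have cov: "\<sigma> b \<le> \<sigma> a \<and> (\<epsilon> a b = -1 \<longrightarrow> \<sigma> b < \<sigma> a)" if c: "covers P le a b" for a b
  proof -
    have ab: "a \<in> P" "b \<in> P" "le a b" using c unfolding covers_def by auto
    have "\<delta> a = \<epsilon> a b + \<delta> b" using k c unfolding K_def by blast
    moreover have "\<tau> b \<le> \<tau> a" using t' ab by blast
    moreover have "\<epsilon> a b = 1 \<longrightarrow> \<tau> b < \<tau> a" using t' c by blast
    ultimately show ?thesis using ab epsv[of a b] unfolding \<sigma>_def by auto
  qed
  have ge1: "\<sigma> x \<ge> 1" if x: "x \<in> P" for x
  proof (rule up_induct[OF x])
    fix x assume x: "x \<in> P" and IH: "\<And>y. y \<in> P \<Longrightarrow> le x y \<Longrightarrow> x \<noteq> y \<Longrightarrow> 1 \<le> \<sigma> y"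
    show "1 \<le> \<sigma> x"
    proof (cases "maximal_in P le x")
      case True then show ?thesis using delta_max x t' unfolding \<sigma>_def by auto
    next
      case False
      then obtain v where "v \<in> P" "le x v" "v \<noteq> x" using x unfolding maximal_in_def by blast
      then obtain y where y: "covers P le x y" using cover_exists x by blast
      then have "y \<in> P" "le x y" "x \<noteq> y" unfolding covers_def by auto
      then have "1 \<le> \<sigma> y" using IH by blast
      then show ?thesis using cov[OF y] by auto
    qed
  qed
  have mono: "\<sigma> b \<le> \<sigma> a" if "a \<in> P" "b \<in> P" "le a b" for a b
    using mono_from_covers[of \<sigma> a b] cov that by blast
  have out: "\<sigma> x = 0" if "x \<notin> P" for x using that unfolding \<sigma>_def by simp
  have sA: "\<sigma> \<in> partitions P le \<epsilon>" unfolding part_mem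
    using ge1 mono out cov by blast
  have "Ph \<sigma> = \<tau>"
  proof
    fix x show "Ph \<sigma> x = \<tau> x" unfolding Phi_def \<sigma>_def using t' by auto
  qed
  then show ?thesis using sA by blast
qed

end


context fp begin

lemma not_surj: assumes nk: "\<not> K"
  shows "\<exists>\<tau>\<in>partitions P le (neg_lab \<epsilon>). \<tau> \<notin> Ph ` partitions P le \<epsilon>"
proof -
  obtain x y where c: "covers P le x y" and ne: "\<delta> x \<noteq> \<epsilon> x y + \<delta> y"
    using nk unfolding K_def by blast
  have gt: "\<epsilon> x y + \<delta> y + 1 \<le> \<delta> x" using delta_cover[OF c] ne by linarith
  have xy: "x \<in> P" "y \<in> P" "le x y" "x \<noteq> y" using c unfolding covers_def by auto
  define base where "base w = 1 + int (card (up w))" for w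
  define M where "M = int (card P) + 1"
  define \<tau> where "\<tau> w = (if w \<notin> P then 0 else if w = x then base y + M + (if \<epsilon> x y = 1 then 1 else 0)
      else base w + (if le w y then M else 0))" for w
  have bstrict: "base b < base a" if "a \<in> P" "b \<in> P" "le a b" "a \<noteq> b" for a b
    using up_psubset[OF that] unfolding base_def by simp
  have bge: "base w \<ge> 1" for w unfolding base_def by simp
  have ble: "base w \<le> M" for w using up_card_le[of w] unfolding base_def M_def by simp
  have tx: "\<tau> x = base y + M + (if \<epsilon> x y = 1 then 1 else 0)" using xy unfolding \<tau>_def by simp
  have ty: "\<tau> y = base y + M" using xy refl unfolding \<tau>_def by simp
  have key: "\<tau> b \<le> \<tau> a \<and> (\<not> (a = x \<and> b = y \<and> \<epsilon> x y \<noteq> 1) \<longrightarrow> \<tau> b < \<tau> a)"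
    if ab: "a \<in> P" "b \<in> P" "le a b" "a \<noteq> b" for a b
  proof (cases "a = x")
    case True
    show ?thesis
    proof (cases "le b y")
      case True
      then have "b = y" using c ab \<open>a = x\<close> unfolding covers_def by auto
      then show ?thesis using tx ty \<open>a = x\<close> by auto
    next
      case False
      then have "\<tau> b = base b" using ab True unfolding \<tau>_def by auto
      then show ?thesis using tx ble[of b] bge[of y] True by auto
    qed
  next
    case False
    note ax = False
    show ?thesis
    proof (cases "b = x")
      case True
      have "le a y" using trans[OF ab(1) xy(1) xy(2)] ab True xy by blast
      then have ta: "\<tau> a = base a + M" using ab ax unfolding \<tau>_def by simp
      have "base x < base a" using bstrict ab True by blast
      moreover have "base y < base x" using bstrict xy by blast
      ultimately show ?thesis using ta tx True by auto
    next
      case False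
      have "le b y \<longrightarrow> le a y" using trans[OF ab(1) ab(2) xy(2)] ab(3) by blast
      moreover have "M \<ge> 0" unfolding M_def by simp
      ultimately show ?thesis using bstrict[OF ab] ab ax False unfolding \<tau>_def by auto
    qed
  qed
  have tA: "\<tau> \<in> partitions P le (neg_lab \<epsilon>)"
    unfolding part_mem
  proof (intro conjI ballI allI impI)
    fix w assume "w \<in> P" then show "1 \<le> \<tau> w" unfolding \<tau>_def using bge[of w] bge[of y] M_def by auto
  next
    fix w assume "w \<notin> P" then show "\<tau> w = 0" unfolding \<tau>_def by simp
  next
    fix a b assume "a \<in> P" "b \<in> P" "le a b"
    then show "\<tau> b \<le> \<tau> a" using key[of a b] by (cases "a = b") auto
  next
    fix a b assume h: "covers P le a b \<and> neg_lab \<epsilon> a b = -1"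
    then have "a \<in> P" "b \<in> P" "le a b" "a \<noteq> b" "\<epsilon> a b = 1" using neg_iff unfolding covers_def by auto
    then show "\<tau> b < \<tau> a" using key[of a b] by auto
  qed
  have "\<tau> \<notin> Ph ` partitions P le \<epsilon>"
  proof
    assume "\<tau> \<in> Ph ` partitions P le \<epsilon>"
    then obtain \<sigma> where s: "\<sigma> \<in> partitions P le \<epsilon>" and e: "\<tau> = Ph \<sigma>" by blast
    have "\<tau> x = \<sigma> x + \<delta> x" "\<tau> y = \<sigma> y + \<delta> y" using e xy unfolding Phi_def by auto
    moreover have "\<sigma> y \<le> \<sigma> x" using s xy unfolding part_mem by blast
    moreover have "\<epsilon> x y = -1 \<longrightarrow> \<sigma> y < \<sigma> x" using s c unfolding part_mem by blast
    ultimately show False using tx ty gt epsv[of x y] by auto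
  qed
  then show ?thesis using tA by blast
qed

theorem main: "bij_betw Ph (partitions P le \<epsilon>) (partitions P le (neg_lab \<epsilon>)) \<longleftrightarrow> dual_consistent P le \<epsilon>"
proof
  assume b: "bij_betw Ph (partitions P le \<epsilon>) (partitions P le (neg_lab \<epsilon>))"
  have K
  proof (rule ccontr)
    assume "\<not> K"
    then show False using not_surj b unfolding bij_betw_def by blast
  qed
  then show "dual_consistent P le \<epsilon>" by (rule K_cons)
next
  assume "dual_consistent P le \<epsilon>"
  then have k: K by (rule cons_K)
  show "bij_betw Ph (partitions P le \<epsilon>) (partitions P le (neg_lab \<epsilon>))"
    unfolding bij_betw_def
  proof (intro conjI Phi_inj)
    show "Ph ` partitions P le \<epsilon> = partitions P le (neg_lab \<epsilon>)"
      using Phi_in Phi_surj[OF k] by blast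
  qed
qed

end

theorem proposition7p1:
  fixes P :: "'a set" and le :: "'a \<Rightarrow> 'a \<Rightarrow> bool" and \<omega> :: "'a \<Rightarrow> nat"
  assumes "finite P"
    and "poset_on P le"
    and "bij_betw \<omega> P {1..card P}"
  shows "bij_betw (Phi P le (eps_of \<omega>)) (partitions P le (eps_of \<omega>))
            (partitions P le (neg_lab (eps_of \<omega>)))
         \<longleftrightarrow> dual_consistent P le (eps_of \<omega>)"
proof -
  interpret fp P le "eps_of \<omega>"
    using assms(1,2) by unfold_locales (auto simp: eps_of_def)
  show ?thesis by (rule main)
qed


end
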